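(* Let $A,B\in\mathcal A_n$ with $A<B$ in ASM order. Then $\mathbf x^A-\mathbf x^B=L(x)\,M(x)$, where $L(x)=\prod_{i,j}x_{ij}^{c_{ij}}$ is a Laurent monomial with all $c_{ij}\ge-1$, and $M(x)$ is a polynomial with nonnegative coefficients and zero constant term in minors of $x$ of size $1$ or $2$ whose row indices are consecutive and whose column indices are consecutive.
   Context: $\mathcal A_n$ is the set of $n\times n$ alternating sign matrices (entries in $\{-1,0,1\}$, partial row and column sums in $\{0,1\}$, full row and column sums $1$). Corner sum matrix $\widetilde A(i,j)=\sum_{p\le i,q\le j}a_{pq}$; ASM order: $A\le B$ iff $\widetilde A(i,j)\ge\widetilde B(i,j)$ for all $i,j$, and $A<B$ means $A\le B$, $A\ne B$. $x=(x_{ij})$ is a matrix of commuting indeterminates, $\mathbf x^A=\prod_{i,j}x_{ij}^{a_{ij}}$. *)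

theory Defs
  imports Complex_Main "HOL-Library.Multiset"
begin

text \<open>Matrices are functions nat => nat => _ indexed by 0..n-1 (rows, columns).\<close>

definition is_ASM :: "nat \<Rightarrow> (nat \<Rightarrow> nat \<Rightarrow> int) \<Rightarrow> bool" where
  "is_ASM n A \<longleftrightarrow>
     (\<forall>i j. (i \<ge> n \<or> j \<ge> n) \<longrightarrow> A i j = 0) \<and>
     (\<forall>i<n. \<forall>j<n. A i j \<in> {-1, 0, 1}) \<and>
     (\<forall>i<n. \<forall>j<n. (\<Sum>q\<le>j. A i q) \<in> {0, 1}) \<and>
     (\<forall>j<n. \<forall>i<n. (\<Sum>p\<le>i. A p j) \<in> {0, 1}) \<and>
     (\<forall>i<n. (\<Sum>q<n. A i q) = 1) \<and>
     (\<forall>j<n. (\<Sum>p<n. A p j) = 1)"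

definition corner_sum :: "(nat \<Rightarrow> nat \<Rightarrow> int) \<Rightarrow> nat \<Rightarrow> nat \<Rightarrow> int" where
  "corner_sum A i j = (\<Sum>p\<le>i. \<Sum>q\<le>j. A p q)"

definition asm_le :: "nat \<Rightarrow> (nat \<Rightarrow> nat \<Rightarrow> int) \<Rightarrow> (nat \<Rightarrow> nat \<Rightarrow> int) \<Rightarrow> bool" where
  "asm_le n A B \<longleftrightarrow> (\<forall>i<n. \<forall>j<n. corner_sum A i j \<ge> corner_sum B i j)"

definition asm_less :: "nat \<Rightarrow> (nat \<Rightarrow> nat \<Rightarrow> int) \<Rightarrow> (nat \<Rightarrow> nat \<Rightarrow> int) \<Rightarrow> bool" where
  "asm_less n A B \<longleftrightarrow> asm_le n A B \<and> A \<noteq> B"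

definition laurent_mono :: "nat \<Rightarrow> (nat \<Rightarrow> nat \<Rightarrow> int) \<Rightarrow> (nat \<Rightarrow> nat \<Rightarrow> real) \<Rightarrow> real" where
  "laurent_mono n C x = (\<Prod>i<n. \<Prod>j<n. x i j powi C i j)"

datatype minor = Minor1 nat nat | Minor2 nat nat

fun valid_minor :: "nat \<Rightarrow> minor \<Rightarrow> bool" where
  "valid_minor n (Minor1 i j) \<longleftrightarrow> i < n \<and> j < n"
| "valid_minor n (Minor2 i j) \<longleftrightarrow> i + 1 < n \<and> j + 1 < n"

fun minor_val :: "minor \<Rightarrow> (nat \<Rightarrow> nat \<Rightarrow> real) \<Rightarrow> real" where
  "minor_val (Minor1 i j) x = x i j"
| "minor_val (Minor2 i j) x = x i j * x (i+1) (j+1) - x i (j+1) * x (i+1) j"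

text \<open>A polynomial in the minors: coefficient function on monomials (multisets of minors),
  finitely supported. Its value at x:\<close>
definition minor_poly_val :: "(minor multiset \<Rightarrow> nat) \<Rightarrow> (nat \<Rightarrow> nat \<Rightarrow> real) \<Rightarrow> real" where
  "minor_poly_val c x = (\<Sum>m\<in>{m. c m \<noteq> 0}. real (c m) * (\<Prod>\<mu>\<in>#m. minor_val \<mu> x))"

definition good_minor_poly :: "nat \<Rightarrow> (minor multiset \<Rightarrow> nat) \<Rightarrow> bool" where
  "good_minor_poly n c \<longleftrightarrow>
     finite {m. c m \<noteq> 0} \<and>
     (\<forall>m. c m \<noteq> 0 \<longrightarrow> (\<forall>\<mu>\<in>#m. valid_minor n \<mu>)) \<and>
     c {#} = 0"

end

theory Submission
  imports Defs "HOL-Library.Product_Lexorder"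
begin


definition dl :: "nat \<Rightarrow> nat \<Rightarrow> nat \<Rightarrow> nat \<Rightarrow> int" where
  "dl a b p q = (if p = a \<and> q = b then 1 else 0)"

lemma laurent_add:
  assumes "\<forall>i<n. \<forall>j<n. x i j \<noteq> 0"
  shows "laurent_mono n (\<lambda>p q. F p q + G p q) x = laurent_mono n F x * laurent_mono n G x"
  unfolding laurent_mono_def prod.distrib[symmetric]
  using assms by (intro prod.cong refl) (simp add: power_int_add)

lemma laurent_dl:
  assumes "a < n" "b < n"
  shows "laurent_mono n (dl a b) x = x a b"
proof -
  have "laurent_mono n (dl a b) x = (\<Prod>i<n. \<Prod>j<n. if i = a \<and> j = b then x i j else 1)"
    unfolding laurent_mono_def dl_def by (intro prod.cong refl) auto
  also have "\<dots> = (\<Prod>i<n. if i = a then x i b else 1)"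
    using assms by (intro prod.cong refl) (auto simp: prod.delta)
  also have "\<dots> = x a b" using assms by (simp add: prod.delta)
  finally show ?thesis .
qed

lemma prod_mset_sum_set:
  "finite S \<Longrightarrow> prod_mset (image_mset g (\<Sum>a\<in>S. f a)) = (\<Prod>a\<in>S. prod_mset (image_mset g (f a)))"
  by (induction S rule: finite_induct) auto

definition mono_ms :: "nat \<Rightarrow> (nat \<Rightarrow> nat \<Rightarrow> int) \<Rightarrow> minor multiset" where
  "mono_ms n F = (\<Sum>p<n. \<Sum>q<n. replicate_mset (nat (F p q)) (Minor1 p q))"

lemma in_sum_set_mset:
  "finite S \<Longrightarrow> x \<in># (\<Sum>a\<in>S. f a) \<Longrightarrow> \<exists>a\<in>S. x \<in># f a"
  by (induction S rule: finite_induct) auto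

lemma mono_ms_valid: "\<mu> \<in># mono_ms n F \<Longrightarrow> valid_minor n \<mu>"
  unfolding mono_ms_def
  by (drule in_sum_set_mset[rotated], simp, clarify, drule in_sum_set_mset[rotated], simp,
      auto split: if_splits)

lemma mono_ms_val:
  assumes "\<forall>i<n. \<forall>j<n. F i j \<ge> 0"
  shows "prod_mset (image_mset (\<lambda>\<mu>. minor_val \<mu> x) (mono_ms n F)) = laurent_mono n F x"
  unfolding mono_ms_def laurent_mono_def
  apply (simp add: prod_mset_sum_set)
  apply (intro prod.cong refl)
  subgoal for p q using assms
    by (metis lessThan_iff nat_0_le power_int_of_nat)
  done



definition rs :: "(nat \<Rightarrow> nat \<Rightarrow> int) \<Rightarrow> nat \<Rightarrow> nat \<Rightarrow> int" where
  "rs A i j = (\<Sum>q\<le>j. A i q)"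
definition cs :: "(nat \<Rightarrow> nat \<Rightarrow> int) \<Rightarrow> nat \<Rightarrow> nat \<Rightarrow> int" where
  "cs A i j = (\<Sum>p\<le>i. A p j)"

definition elem :: "nat \<Rightarrow> nat \<Rightarrow> nat \<Rightarrow> nat \<Rightarrow> int" where
  "elem i j p q = dl i (Suc j) p q + dl (Suc i) j p q - dl i j p q - dl (Suc i) (Suc j) p q"

lemma sum_dl_row1: "(\<Sum>q\<le>j. dl a b p q) = (if p = a \<and> b \<le> j then 1 else 0)"
  by (cases "p = a"; cases "q = b") (auto simp: dl_def)
lemma sum_dl_row2: "(\<Sum>q<j. dl a b p q) = (if p = a \<and> b < j then 1 else 0)"
  by (cases "p = a"; cases "q = b") (auto simp: dl_def)
lemma sum_dl_col1: "(\<Sum>p\<le>i. dl a b p q) = (if q = b \<and> a \<le> i then 1 else 0)"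
  by (cases "p = a"; cases "q = b") (auto simp: dl_def)
lemma sum_dl_col2: "(\<Sum>p<i. dl a b p q) = (if q = b \<and> a < i then 1 else 0)"
  by (cases "p = a"; cases "q = b") (auto simp: dl_def)

lemma rs_elem: "rs (elem i j) p q = (if p = Suc i \<and> q = j then 1 else if p = i \<and> q = j then -1 else 0)"
  unfolding rs_def elem_def by (simp add: sum.distrib sum_subtractf sum_dl_row1)
lemma cs_elem: "cs (elem i j) p q = (if p = i \<and> q = Suc j then 1 else if p = i \<and> q = j then -1 else 0)"
  unfolding cs_def elem_def by (simp add: sum.distrib sum_subtractf sum_dl_col1)

lemma rs_add: "rs (\<lambda>p q. A p q + E p q) i j = rs A i j + rs E i j"
  unfolding rs_def by (simp add: sum.distrib)
lemma cs_add: "cs (\<lambda>p q. A p q + E p q) i j = cs A i j + cs E i j"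
  unfolding cs_def by (simp add: sum.distrib)

lemma corner_elem: "corner_sum (\<lambda>p q. A p q + elem i j p q) p q = corner_sum A p q - (if p = i \<and> q = j then 1 else 0)"
proof -
  have cd: "corner_sum (dl a b) p q = (if a \<le> p \<and> b \<le> q then 1 else 0)" for a b p q
    unfolding corner_sum_def sum_dl_row1 by (cases "b \<le> q") auto
  have "corner_sum (elem i j) p q = - (if p = i \<and> q = j then 1 else 0)"
    unfolding elem_def corner_sum_def
    by (simp add: sum.distrib sum_subtractf flip: corner_sum_def) (auto simp: cd)
  then show ?thesis unfolding corner_sum_def by (simp add: sum.distrib)
qed

lemma entries_from_rs:
  assumes "\<forall>i<n. \<forall>j<n. rs A i j \<in> {0,1}" "i < n" "j < n"
  shows "A i j \<in> {-1,0,1}"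
proof (cases j)
  case 0
  have "rs A i 0 \<in> {0,1}" using assms 0 by auto
  then show ?thesis using 0 by (auto simp: rs_def)
next
  case (Suc j')
  have "A i j = rs A i j - rs A i j'" unfolding rs_def Suc by simp
  moreover have "rs A i j \<in> {0,1}" "rs A i j' \<in> {0,1}" using assms Suc by auto
  ultimately show ?thesis by auto
qed

lemma ASM_rs: "is_ASM n A \<Longrightarrow> i < n \<Longrightarrow> j < n \<Longrightarrow> rs A i j \<in> {0,1}"
  unfolding is_ASM_def rs_def by blast
lemma ASM_cs: "is_ASM n A \<Longrightarrow> i < n \<Longrightarrow> j < n \<Longrightarrow> cs A i j \<in> {0,1}"
  unfolding is_ASM_def cs_def by blast

lemma move_ASM:
  assumes A: "is_ASM n A" and ij: "Suc i < n" "Suc j < n"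
    and c1: "rs A i j = 1" "cs A i j = 1" "rs A (Suc i) j = 0" "cs A i (Suc j) = 0"
  shows "is_ASM n (\<lambda>p q. A p q + elem i j p q)" (is "is_ASM n ?A")
proof -
  have rsA: "\<forall>p<n. \<forall>q<n. rs ?A p q \<in> {0,1}"
  proof (intro allI impI)
    fix p q assume "p < n" "q < n"
    then show "rs ?A p q \<in> {0,1}" using c1 ASM_rs[OF A, of p q]
      by (auto simp: rs_add rs_elem)
  qed
  have csA: "\<forall>q<n. \<forall>p<n. cs ?A p q \<in> {0,1}"
  proof (intro allI impI)
    fix p q assume "p < n" "q < n"
    then show "cs ?A p q \<in> {0,1}" using c1 ASM_cs[OF A, of p q]
      by (auto simp: cs_add cs_elem)
  qed
  have z: "\<forall>p q. (p \<ge> n \<or> q \<ge> n) \<longrightarrow> ?A p q = 0"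
    using A ij unfolding is_ASM_def elem_def dl_def by auto
  have rt: "\<forall>p<n. (\<Sum>q<n. ?A p q) = 1"
    using A ij unfolding is_ASM_def elem_def
    by (simp add: sum.distrib sum_subtractf sum_dl_row2)
  have ct: "\<forall>q<n. (\<Sum>p<n. ?A p q) = 1"
    using A ij unfolding is_ASM_def elem_def
    by (simp add: sum.distrib sum_subtractf sum_dl_col2)
  show ?thesis unfolding is_ASM_def
    using z rt ct entries_from_rs[OF rsA] rsA csA unfolding rs_def cs_def by blast
qed

lemma corner_Suc_row: "corner_sum A (Suc i) j = corner_sum A i j + rs A (Suc i) j"
  unfolding corner_sum_def rs_def by simp
lemma corner_Suc_col: "corner_sum A i (Suc j) = corner_sum A i j + cs A i (Suc j)"
  unfolding corner_sum_def cs_def by (simp add: sum.distrib)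
lemma corner_0_row: "corner_sum A 0 j = rs A 0 j"
  unfolding corner_sum_def rs_def by simp
lemma corner_0_col: "corner_sum A i 0 = cs A i 0"
  unfolding corner_sum_def cs_def by simp

lemma corner_last_row:
  assumes A: "is_ASM n A" and "j < n"
  shows "corner_sum A (n - 1) j = int j + 1"
proof -
  have n: "{..n-1} = {..<n}" using assms by auto
  have "corner_sum A (n - 1) j = (\<Sum>q\<le>j. \<Sum>p<n. A p q)"
    unfolding corner_sum_def n by (rule sum.swap)
  also have "\<dots> = (\<Sum>q\<le>j. 1)" using A assms unfolding is_ASM_def by auto
  finally show ?thesis by simp
qed

lemma corner_last_col:
  assumes A: "is_ASM n A" and "i < n"
  shows "corner_sum A i (n - 1) = int i + 1"
proof -
  have n: "{..n-1} = {..<n}" using assms by auto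
  have "corner_sum A i (n - 1) = (\<Sum>p\<le>i. \<Sum>q<n. A p q)"
    unfolding corner_sum_def n ..
  also have "\<dots> = (\<Sum>p\<le>i. 1)" using A assms unfolding is_ASM_def by auto
  finally show ?thesis by simp
qed



lemma exists_move:
  assumes A: "is_ASM n A" and B: "is_ASM n B"
    and p0: "i0 < n" "j0 < n" "corner_sum B i0 j0 < corner_sum A i0 j0"
  shows "\<exists>i j. Suc i < n \<and> Suc j < n \<and> corner_sum B i j < corner_sum A i j \<and>
     rs A i j = 1 \<and> cs A i j = 1 \<and> rs A (Suc i) j = 0 \<and> cs A i (Suc j) = 0"
proof -
  define a where "a = corner_sum A"
  define b where "b = corner_sum B"
  define d where "d p q = a p q - b p q" for p q
  define S where "S = {(p,q). p < n \<and> q < n \<and> d p q > 0}"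
  define sc where "sc = (\<lambda>(p,q). (d p q, a p q, - int (p+q)))"
  have fin: "finite S" unfolding S_def
    by (rule finite_subset[of _ "{..<n} \<times> {..<n}"]) auto
  have ne: "(i0,j0) \<in> S" using p0 unfolding S_def d_def a_def b_def by auto
  have "Max (sc ` S) \<in> sc ` S" using fin ne by (intro Max_in) auto
  then obtain s where s: "s \<in> S" "sc s = Max (sc ` S)" by auto
  obtain i j where sij: "s = (i,j)" by (cases s)
  have mx: "sc (p,q) \<le> sc (i,j)" if "p < n" "q < n" "d p q > 0" for p q
    using s sij that fin unfolding S_def by (metis (mono_tags, lifting) Max_ge S_def case_prodI finite_imageI image_eqI mem_Collect_eq)
  have ij: "i < n" "j < n" "d i j > 0" using s sij unfolding S_def by auto
  have rsB: "rs B p q \<in> {0,1}" if "p < n" "q < n" for p q using ASM_rs[OF B] that by auto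
  have csB: "cs B p q \<in> {0,1}" if "p < n" "q < n" for p q using ASM_cs[OF B] that by auto
  have r1: "rs A i j = 1"
  proof (rule ccontr)
    assume "rs A i j \<noteq> 1"
    then have r0: "rs A i j = 0" using ASM_rs[OF A ij(1,2)] by auto
    show False
    proof (cases i)
      case 0
      then show False using r0 rsB[of 0 j] ij corner_0_row[of A j] corner_0_row[of B j] unfolding d_def a_def b_def by auto
    next
      case (Suc i')
      have "a i j = a i' j" "b i j \<ge> b i' j"
        using r0 rsB[of i j] ij unfolding a_def b_def Suc corner_Suc_row by auto
      then have "d i' j \<ge> d i j" unfolding d_def by auto
      then have "sc (i',j) \<le> sc (i,j)" using mx[of i' j] ij Suc by auto
      then show False using \<open>a i j = a i' j\<close> \<open>d i' j \<ge> d i j\<close> Suc unfolding sc_def by auto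
    qed
  qed
  have c1: "cs A i j = 1"
  proof (rule ccontr)
    assume "cs A i j \<noteq> 1"
    then have r0: "cs A i j = 0" using ASM_cs[OF A ij(1,2)] by auto
    show False
    proof (cases j)
      case 0
      then show False using r0 csB[of i 0] ij corner_0_col[of A i] corner_0_col[of B i] unfolding d_def a_def b_def by auto
    next
      case (Suc j')
      have "a i j = a i j'" "b i j \<ge> b i j'"
        using r0 csB[of i j] ij unfolding a_def b_def Suc corner_Suc_col by auto
      then have "d i j' \<ge> d i j" unfolding d_def by auto
      then have "sc (i,j') \<le> sc (i,j)" using mx[of i j'] ij Suc by auto
      then show False using \<open>a i j = a i j'\<close> \<open>d i j' \<ge> d i j\<close> Suc unfolding sc_def by auto
    qed
  qed
  have si: "Suc i < n"
  proof (rule ccontr)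
    assume "\<not> Suc i < n"
    then have "i = n - 1" using ij by auto
    then show False using corner_last_row[OF A ij(2)] corner_last_row[OF B ij(2)] ij
      unfolding d_def a_def b_def by auto
  qed
  have sj: "Suc j < n"
  proof (rule ccontr)
    assume "\<not> Suc j < n"
    then have "j = n - 1" using ij by auto
    then show False using corner_last_col[OF A ij(1)] corner_last_col[OF B ij(1)] ij
      unfolding d_def a_def b_def by auto
  qed
  have r2: "rs A (Suc i) j = 0"
  proof (rule ccontr)
    assume "rs A (Suc i) j \<noteq> 0"
    then have r0: "rs A (Suc i) j = 1" using ASM_rs[OF A si ij(2)] by auto
    have "a (Suc i) j = a i j + 1" "b (Suc i) j \<le> b i j + 1"
      using r0 rsB[of "Suc i" j] ij si unfolding a_def b_def corner_Suc_row by auto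
    then have "d (Suc i) j \<ge> d i j" unfolding d_def by auto
    then have "sc (Suc i,j) \<le> sc (i,j)" using mx[of "Suc i" j] ij si by auto
    then show False using \<open>a (Suc i) j = a i j + 1\<close> \<open>d (Suc i) j \<ge> d i j\<close> unfolding sc_def by auto
  qed
  have c2: "cs A i (Suc j) = 0"
  proof (rule ccontr)
    assume "cs A i (Suc j) \<noteq> 0"
    then have r0: "cs A i (Suc j) = 1" using ASM_cs[OF A ij(1) sj] by auto
    have "a i (Suc j) = a i j + 1" "b i (Suc j) \<le> b i j + 1"
      using r0 csB[of i "Suc j"] ij sj unfolding a_def b_def corner_Suc_col by auto
    then have "d i (Suc j) \<ge> d i j" unfolding d_def by auto
    then have "sc (i,Suc j) \<le> sc (i,j)" using mx[of i "Suc j"] ij sj by auto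
    then show False using \<open>a i (Suc j) = a i j + 1\<close> \<open>d i (Suc j) \<ge> d i j\<close> unfolding sc_def by auto
  qed
  show ?thesis using si sj r1 c1 r2 c2 ij(3) unfolding d_def a_def b_def by auto
qed



definition pv :: "minor multiset \<Rightarrow> (nat \<Rightarrow> nat \<Rightarrow> real) \<Rightarrow> real" where
  "pv m x = prod_mset (image_mset (\<lambda>\<mu>. minor_val \<mu> x) m)"

definition rep :: "nat \<Rightarrow> (nat \<Rightarrow> nat \<Rightarrow> int) \<Rightarrow> (nat \<Rightarrow> nat \<Rightarrow> int) \<Rightarrow> bool" where
  "rep n A B \<longleftrightarrow> (\<exists>C ms. (\<forall>i<n. \<forall>j<n. C i j \<ge> -1) \<and>
     (\<forall>m\<in>set ms. m \<noteq> {#} \<and> (\<forall>\<mu>\<in>#m. valid_minor n \<mu>)) \<and>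
     (\<forall>x. (\<forall>i<n. \<forall>j<n. x i j \<noteq> 0) \<longrightarrow>
        laurent_mono n A x - laurent_mono n B x = laurent_mono n C x * (\<Sum>m\<leftarrow>ms. pv m x)))"

definition Dm :: "nat \<Rightarrow> (nat \<Rightarrow> nat \<Rightarrow> int) \<Rightarrow> (nat \<Rightarrow> nat \<Rightarrow> int) \<Rightarrow> nat" where
  "Dm n A B = nat (\<Sum>p<n. \<Sum>q<n. corner_sum A p q - corner_sum B p q)"

lemma eq_from_corner:
  assumes A: "is_ASM n A" and B: "is_ASM n B"
    and eq: "\<forall>p<n. \<forall>q<n. corner_sum A p q = corner_sum B p q"
  shows "A = B"
proof -
  have r: "rs A p q = rs B p q" if "p < n" "q < n" for p q
  proof (cases p)
    case 0 then show ?thesis using eq that corner_0_row[of A q] corner_0_row[of B q] by auto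
  next
    case (Suc p')
    then show ?thesis using eq that corner_Suc_row[of A p' q] corner_Suc_row[of B p' q]
      by (metis Suc_lessD add_left_cancel)
  qed
  have "A p q = B p q" for p q
  proof (cases "p < n \<and> q < n")
    case True
    show ?thesis
    proof (cases q)
      case 0 then show ?thesis using r[of p 0] True by (simp add: rs_def)
    next
      case (Suc q')
      then show ?thesis using r[of p q] r[of p q'] True by (simp add: rs_def)
    qed
  next
    case False then show ?thesis using A B unfolding is_ASM_def by auto
  qed
  then show ?thesis by auto
qed

lemma pv_union: "pv (m + m') x = pv m x * pv m' x"
  unfolding pv_def by simp

lemma sum_list_pv_shift: "(\<Sum>m\<leftarrow>map (\<lambda>m. m + m0) ms. pv m x) = pv m0 x * (\<Sum>m\<leftarrow>ms. pv m x)"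
  by (induction ms) (auto simp: pv_union algebra_simps)

lemma main_ind:
  assumes B: "is_ASM n B"
  shows "is_ASM n A \<Longrightarrow> asm_le n A B \<Longrightarrow> rep n A B"
proof (induction "Dm n A B" arbitrary: A rule: less_induct)
  case less
  note A = less.prems(1) and le = less.prems(2)
  show ?case
  proof (cases "\<forall>p<n. \<forall>q<n. corner_sum A p q = corner_sum B p q")
    case True
    then have "A = B" using eq_from_corner[OF A B] by auto
    then show ?thesis unfolding rep_def by (intro exI[of _ "\<lambda>_ _. 0"] exI[of _ "[]"]) auto
  next
    case False
    then obtain i0 j0 where p00: "i0 < n" "j0 < n" "corner_sum A i0 j0 \<noteq> corner_sum B i0 j0"
      by blast
    then have p0: "i0 < n" "j0 < n" "corner_sum B i0 j0 < corner_sum A i0 j0"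
      using le unfolding asm_le_def by force+
    obtain i j where ij: "Suc i < n" "Suc j < n" "corner_sum B i j < corner_sum A i j"
      "rs A i j = 1" "cs A i j = 1" "rs A (Suc i) j = 0" "cs A i (Suc j) = 0"
      using exists_move[OF A B p0] by blast
    define A' where "A' = (\<lambda>p q. A p q + elem i j p q)"
    have A': "is_ASM n A'" unfolding A'_def using move_ASM[OF A ij(1,2,4-7)] .
    have cA': "corner_sum A' p q = corner_sum A p q - (if p = i \<and> q = j then 1 else 0)" for p q
      unfolding A'_def by (rule corner_elem)
    have le': "asm_le n A' B" using le ij(3) unfolding asm_le_def cA' by auto
    define T where "T = (\<Sum>p<n. \<Sum>q<n. corner_sum A p q - corner_sum B p q)"
    have T1: "T \<ge> 1"
    proof -
      have nn: "\<forall>p<n. \<forall>q<n. corner_sum A p q - corner_sum B p q \<ge> 0" using le unfolding asm_le_def by auto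
      have "corner_sum A i j - corner_sum B i j \<le> (\<Sum>q<n. corner_sum A i q - corner_sum B i q)"
        using nn ij by (intro member_le_sum) auto
      also have "\<dots> \<le> T" unfolding T_def using nn ij
        by (intro member_le_sum[where f = "\<lambda>p. \<Sum>q<n. corner_sum A p q - corner_sum B p q"] sum_nonneg) auto
      finally show ?thesis using ij by auto
    qed
    have "(\<Sum>p<n. \<Sum>q<n. corner_sum A' p q - corner_sum B p q) = T - (\<Sum>p<n. \<Sum>q<n. (if p = i \<and> q = j then 1 else 0))"
      unfolding T_def cA' by (simp add: sum_subtractf)
    also have "(\<Sum>p<n. \<Sum>q<n. (if p = i \<and> q = j then 1 else 0)) = (1::int)"
    proof -
      have "(\<Sum>q<n. (if p = i \<and> q = j then 1 else 0::int)) = (if p = i then 1 else 0)" for p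
        using ij by (cases "p = i") auto
      then show ?thesis using ij by simp
    qed
    finally have "Dm n A' B < Dm n A B" unfolding Dm_def T_def[symmetric] using T1 by simp
    then have "rep n A' B" using less.hyps A' le' by blast
    then obtain C' ms' where C': "\<forall>i<n. \<forall>j<n. C' i j \<ge> -1"
      and ms': "\<forall>m\<in>set ms'. m \<noteq> {#} \<and> (\<forall>\<mu>\<in>#m. valid_minor n \<mu>)"
      and eq': "\<And>x. (\<forall>i<n. \<forall>j<n. x i j \<noteq> 0) \<Longrightarrow>
        laurent_mono n A' x - laurent_mono n B x = laurent_mono n C' x * (\<Sum>m\<leftarrow>ms'. pv m x)"
      unfolding rep_def by blast
    define E where "E p q = A p q - dl i j p q - dl (Suc i) (Suc j) p q" for p q
    define C where "C p q = min (E p q) (C' p q)" for p q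
    have Aij: "A i j \<ge> 0" "A (Suc i) (Suc j) \<ge> 0"
    proof -
      have "A' i j \<in> {-1,0,1}" "A' (Suc i) (Suc j) \<in> {-1,0,1}"
        using A' ij unfolding is_ASM_def by auto
      then show "A i j \<ge> 0" "A (Suc i) (Suc j) \<ge> 0"
        unfolding A'_def elem_def dl_def by auto
    qed
    have E1: "E p q \<ge> -1" if "p < n" "q < n" for p q
    proof -
      have "A p q \<in> {-1,0,1}" using A that unfolding is_ASM_def by auto
      then show ?thesis using Aij unfolding E_def dl_def by auto
    qed
    have C1: "\<forall>p<n. \<forall>q<n. C p q \<ge> -1" using E1 C' unfolding C_def by auto
    define m1 where "m1 = mono_ms n (\<lambda>p q. E p q - C p q) + {#Minor2 i j#}"
    define m0 where "m0 = mono_ms n (\<lambda>p q. C' p q - C p q)"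
    define ms where "ms = m1 # map (\<lambda>m. m + m0) ms'"
    have msv: "\<forall>m\<in>set ms. m \<noteq> {#} \<and> (\<forall>\<mu>\<in>#m. valid_minor n \<mu>)"
      using ms' ij unfolding ms_def m1_def m0_def by (auto dest: mono_ms_valid)
    have eq: "laurent_mono n A x - laurent_mono n B x = laurent_mono n C x * (\<Sum>m\<leftarrow>ms. pv m x)"
      if x: "\<forall>i<n. \<forall>j<n. x i j \<noteq> 0" for x
    proof -
      have LA: "laurent_mono n A x = laurent_mono n E x * (x i j * x (Suc i) (Suc j))"
      proof -
        have "A = (\<lambda>p q. E p q + (\<lambda>p q. dl i j p q + dl (Suc i) (Suc j) p q) p q)"
          unfolding E_def by auto
        then show ?thesis using laurent_add[OF x] laurent_dl ij by (metis Suc_lessD)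
      qed
      have LA': "laurent_mono n A' x = laurent_mono n E x * (x i (Suc j) * x (Suc i) j)"
      proof -
        have "A' = (\<lambda>p q. E p q + (\<lambda>p q. dl i (Suc j) p q + dl (Suc i) j p q) p q)"
          unfolding E_def A'_def elem_def by (auto simp: algebra_simps)
        then show ?thesis using laurent_add[OF x] laurent_dl ij by (metis Suc_lessD)
      qed
      have LE: "laurent_mono n E x = laurent_mono n C x * pv (mono_ms n (\<lambda>p q. E p q - C p q)) x"
      proof -
        have "E = (\<lambda>p q. C p q + (E p q - C p q))" by auto
        moreover have "pv (mono_ms n (\<lambda>p q. E p q - C p q)) x = laurent_mono n (\<lambda>p q. E p q - C p q) x"
          unfolding pv_def by (rule mono_ms_val) (auto simp: C_def)
        ultimately show ?thesis using laurent_add[OF x, of C "\<lambda>p q. E p q - C p q"] by metis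
      qed
      have LC': "laurent_mono n C' x = laurent_mono n C x * pv m0 x"
      proof -
        have "C' = (\<lambda>p q. C p q + (C' p q - C p q))" by auto
        moreover have "pv m0 x = laurent_mono n (\<lambda>p q. C' p q - C p q) x"
          unfolding pv_def m0_def by (rule mono_ms_val) (auto simp: C_def)
        ultimately show ?thesis using laurent_add[OF x, of C "\<lambda>p q. C' p q - C p q"] by metis
      qed
      have pm1: "pv m1 x = pv (mono_ms n (\<lambda>p q. E p q - C p q)) x * (x i j * x (Suc i) (Suc j) - x i (Suc j) * x (Suc i) j)"
        unfolding m1_def pv_union by (simp add: pv_def)
      have "laurent_mono n A x - laurent_mono n B x =
          (laurent_mono n A x - laurent_mono n A' x) + (laurent_mono n A' x - laurent_mono n B x)" by simp
      also have "\<dots> = laurent_mono n E x * (x i j * x (Suc i) (Suc j) - x i (Suc j) * x (Suc i) j)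
          + laurent_mono n C' x * (\<Sum>m\<leftarrow>ms'. pv m x)"
        using LA LA' eq'[OF x] by (simp add: algebra_simps)
      also have "\<dots> = laurent_mono n C x * (\<Sum>m\<leftarrow>ms. pv m x)"
      proof -
        have sl: "(\<Sum>m\<leftarrow>ms. pv m x) = pv m1 x + pv m0 x * (\<Sum>m\<leftarrow>ms'. pv m x)"
          unfolding ms_def by (simp only: list.map sum_list.Cons sum_list_pv_shift)
        show ?thesis unfolding sl LE LC' pm1 by (simp add: algebra_simps)
      qed
      finally show ?thesis .
    qed
    show ?thesis unfolding rep_def using C1 msv eq by blast
  qed
qed

lemma sum_count_list:
  "(\<Sum>m\<in>set ms. real (count_list ms m) * f m) = (\<Sum>m\<leftarrow>ms. f m)"
proof (induction ms)
  case Nil then show ?case by simp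
next
  case (Cons a ms)
  show ?case
  proof (cases "a \<in> set ms")
    case True
    then have "(\<Sum>m\<in>set (a # ms). real (count_list (a # ms) m) * f m)
        = (\<Sum>m\<in>set ms. real (count_list ms m) * f m + (if m = a then f m else 0))"
      by (intro sum.cong) (auto simp: algebra_simps insert_absorb)
    also have "\<dots> = (\<Sum>m\<in>set ms. real (count_list ms m) * f m) + f a"
      using True by (simp add: sum.distrib)
    finally show ?thesis using Cons by simp
  next
    case False
    then have "(\<Sum>m\<in>set (a # ms). real (count_list (a # ms) m) * f m)
        = f a + (\<Sum>m\<in>set ms. real (count_list (a # ms) m) * f m)"
      by (simp add: count_list_0_iff)
    also have "(\<Sum>m\<in>set ms. real (count_list (a # ms) m) * f m) = (\<Sum>m\<in>set ms. real (count_list ms m) * f m)"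
      using False by (intro sum.cong) auto
    finally show ?thesis using Cons by simp
  qed
qed


theorem mainTheorem14:
  fixes n :: nat and A B :: "nat \<Rightarrow> nat \<Rightarrow> int"
  assumes "is_ASM n A" and "is_ASM n B" and "asm_less n A B"
  shows "\<exists>(C :: nat \<Rightarrow> nat \<Rightarrow> int) (c :: minor multiset \<Rightarrow> nat).
           (\<forall>i<n. \<forall>j<n. C i j \<ge> -1) \<and> good_minor_poly n c \<and>
           (\<forall>x :: nat \<Rightarrow> nat \<Rightarrow> real. (\<forall>i<n. \<forall>j<n. x i j \<noteq> 0) \<longrightarrow>
              laurent_mono n A x - laurent_mono n B x
                = laurent_mono n C x * minor_poly_val c x)"
proof -
  have "asm_le n A B" using assms(3) by (simp add: asm_less_def)
  then have "rep n A B" using main_ind assms(1,2) by blast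
  then obtain C ms where C: "\<forall>i<n. \<forall>j<n. C i j \<ge> -1"
      and ms: "\<forall>m\<in>set ms. m \<noteq> {#} \<and> (\<forall>\<mu>\<in>#m. valid_minor n \<mu>)"
      and eq: "\<forall>x. (\<forall>i<n. \<forall>j<n. x i j \<noteq> 0) \<longrightarrow>
        laurent_mono n A x - laurent_mono n B x = laurent_mono n C x * (\<Sum>m\<leftarrow>ms. pv m x)"
    unfolding rep_def by blast
  define c where "c = count (mset ms)"
  have S: "{m. c m \<noteq> 0} = set ms" unfolding c_def by auto
  have good: "good_minor_poly n c"
    unfolding good_minor_poly_def S using ms by (auto simp: c_def)
  have val: "minor_poly_val c x = (\<Sum>m\<leftarrow>ms. pv m x)" for x
    unfolding minor_poly_val_def S unfolding c_def count_mset pv_def[symmetric] by (rule sum_count_list)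
  show ?thesis using C good eq val by metis
qed

end
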